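(* Let $\mathcal{X}=\{\boldsymbol{x}_1,\dots,\boldsymbol{x}_N\}\subseteq\mathbb{R}^D$, $N\ge2$, with $\|\boldsymbol{x}_j\|_2=1$ for all $j$, and let $\lambda\in(1,\infty)$. Let $\mathcal{X}_0\subseteq\mathcal{X}$. If $\lambda<1/\max_{\boldsymbol{x}'\in\mathcal{X}}\max_{\boldsymbol{x}''\in\mathcal{X},\boldsymbol{x}''\neq\boldsymbol{x}'}|\langle\boldsymbol{x}',\boldsymbol{x}''\rangle|$, then $f_\lambda(\boldsymbol{x}_j,\mathcal{X}_0)=\lambda/2$ for all $\boldsymbol{x}_j\in\mathcal{X}\setminus\mathcal{X}_0$.
   Context: For $\mathcal{X}_0\subseteq\mathcal{X}$ nonempty and $\boldsymbol{x}_j\in\mathcal{X}$, define $f_\lambda(\boldsymbol{x}_j,\mathcal{X}_0):=\min_{\boldsymbol{c}\in\mathbb{R}^N}\|\boldsymbol{c}\|_1+\frac{\lambda}{2}\|\boldsymbol{x}_j-\sum_{i:\boldsymbol{x}_i\in\mathcal{X}_0}c_i\boldsymbol{x}_i\|_2^2$, and by convention $f_\lambda(\boldsymbol{x}_j,\emptyset):=\lambda/2$. If the maximum inner product is $0$, the bound is read as $+\infty$. *)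

theory Defs
  imports "HOL-Analysis.Analysis"
begin

definition f_lam :: "real \<Rightarrow> nat \<Rightarrow> (nat \<Rightarrow> 'a::euclidean_space) \<Rightarrow> 'a \<Rightarrow> 'a set \<Rightarrow> real" where
  "f_lam lam N x y X0 =
    (if X0 = {} then lam / 2
     else Inf ((\<lambda>c::nat \<Rightarrow> real. (\<Sum>i<N. \<bar>c i\<bar>) +
                 lam / 2 * (norm (y - (\<Sum>i\<in>{i. i < N \<and> x i \<in> X0}. c i *\<^sub>R x i)))\<^sup>2) ` UNIV))"

definition max_coh :: "nat \<Rightarrow> (nat \<Rightarrow> 'a::euclidean_space) \<Rightarrow> real" where
  "max_coh N x = Max {\<bar>x i \<bullet> x k\<bar> | i k. i < N \<and> k < N \<and> x i \<noteq> x k}"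

end

theory Submission
  imports Defs
begin

theorem theorem3:
  fixes x :: "nat \<Rightarrow> 'a::euclidean_space" and N :: nat and lam :: real and X0 :: "'a set"
  assumes "N \<ge> 2"
    and "inj_on x {..<N}"
    and "\<And>j. j < N \<Longrightarrow> norm (x j) = 1"
    and "lam > 1"
    and "X0 \<subseteq> x ` {..<N}"
    and "max_coh N x = 0 \<or> lam < 1 / max_coh N x"
  shows "\<forall>j<N. x j \<notin> X0 \<longrightarrow> f_lam lam N x (x j) X0 = lam / 2"
proof (intro allI impI)
  fix j assume j: "j < N" "x j \<notin> X0"
  define \<mu> where "\<mu> = max_coh N x"
  define S where "S = {i. i < N \<and> x i \<in> X0}"
  have finS: "finite S" unfolding S_def by simp
  have Ssub: "S \<subseteq> {..<N}" unfolding S_def by auto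
  have fin: "finite {\<bar>x i \<bullet> x k\<bar> | i k. i < N \<and> k < N \<and> x i \<noteq> x k}"
  proof -
    have "{\<bar>x i \<bullet> x k\<bar> | i k. i < N \<and> k < N \<and> x i \<noteq> x k} \<subseteq> (\<lambda>(i,k). \<bar>x i \<bullet> x k\<bar>) ` ({..<N} \<times> {..<N})"
      by auto
    thus ?thesis by (rule finite_subset) auto
  qed
  have coh: "\<bar>x j \<bullet> x i\<bar> \<le> \<mu>" if "i \<in> S" for i
  proof -
    have "i < N" "x i \<noteq> x j" using that j unfolding S_def by auto
    hence "\<bar>x j \<bullet> x i\<bar> \<in> {\<bar>x i \<bullet> x k\<bar> | i k. i < N \<and> k < N \<and> x i \<noteq> x k}"
      using j by (simp only: mem_Collect_eq) (rule exI[of _ j], rule exI[of _ i], simp)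
    thus ?thesis unfolding \<mu>_def max_coh_def using fin by (rule Max_ge[rotated])
  qed
  have mu0: "0 \<le> \<mu>"
  proof -
    have "x 0 \<noteq> x 1" using assms(1,2) unfolding inj_on_def by fastforce
    hence "\<bar>x 0 \<bullet> x 1\<bar> \<in> {\<bar>x i \<bullet> x k\<bar> | i k. i < N \<and> k < N \<and> x i \<noteq> x k}"
      using assms(1) by (simp only: mem_Collect_eq) (rule exI[of _ 0], rule exI[of _ 1], simp)
    hence "\<bar>x 0 \<bullet> x 1\<bar> \<le> \<mu>" unfolding \<mu>_def max_coh_def using fin by (rule Max_ge[rotated])
    thus ?thesis by linarith
  qed
  have lm: "lam * \<mu> \<le> 1"
  proof (cases "\<mu> = 0")
    case False
    hence "\<mu> > 0" using mu0 by simp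
    moreover have "lam < 1 / \<mu>" using assms(6) False unfolding \<mu>_def by auto
    ultimately show ?thesis by (simp add: field_simps)
  qed simp
  define F where "F = (\<lambda>c::nat \<Rightarrow> real. (\<Sum>i<N. \<bar>c i\<bar>) +
                 lam / 2 * (norm (x j - (\<Sum>i\<in>S. c i *\<^sub>R x i)))\<^sup>2)"
  have nj: "norm (x j) = 1" using assms(3) j by simp
  have lb: "lam / 2 \<le> F c" for c
  proof -
    define v where "v = (\<Sum>i\<in>S. c i *\<^sub>R x i)"
    define L where "L = (\<Sum>i<N. \<bar>c i\<bar>)"
    have L0: "L \<ge> 0" unfolding L_def by (simp add: sum_nonneg)
    have "\<bar>x j \<bullet> v\<bar> = \<bar>\<Sum>i\<in>S. c i * (x j \<bullet> x i)\<bar>"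
      unfolding v_def by (simp add: inner_sum_right)
    also have "\<dots> \<le> (\<Sum>i\<in>S. \<bar>c i * (x j \<bullet> x i)\<bar>)" by (rule sum_abs)
    also have "\<dots> \<le> (\<Sum>i\<in>S. \<bar>c i\<bar> * \<mu>)"
      by (rule sum_mono) (simp add: abs_mult coh mult_left_mono)
    also have "\<dots> = \<mu> * (\<Sum>i\<in>S. \<bar>c i\<bar>)" by (simp add: sum_distrib_left mult.commute)
    also have "\<dots> \<le> \<mu> * L"
    proof -
      have "(\<Sum>i\<in>S. \<bar>c i\<bar>) \<le> L" unfolding L_def
        by (rule sum_mono2) (auto simp: Ssub)
      thus ?thesis using mu0 by (simp add: mult_left_mono)
    qed
    finally have ib: "\<bar>x j \<bullet> v\<bar> \<le> \<mu> * L" .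
    have "(norm (x j - v))\<^sup>2 = (norm (x j))\<^sup>2 - 2 * (x j \<bullet> v) + (norm v)\<^sup>2"
      by (simp add: power2_norm_eq_inner inner_diff_left inner_diff_right inner_commute)
    moreover have "(norm (x j))\<^sup>2 = 1" using nj by simp
    moreover have "x j \<bullet> v \<le> \<mu> * L" using ib by linarith
    moreover have "0 \<le> (norm v)\<^sup>2" by simp
    ultimately have n2: "(norm (x j - v))\<^sup>2 \<ge> 1 - 2 * \<mu> * L" by linarith
    have "F c = L + lam/2 * (norm (x j - v))\<^sup>2" unfolding F_def L_def v_def by simp
    also have "\<dots> \<ge> L + lam/2 * (1 - 2 * \<mu> * L)"
      using n2 assms(4) by (simp add: mult_left_mono)
    finally have "F c \<ge> L + lam/2 - (lam * \<mu>) * L" by (simp add: algebra_simps)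
    moreover have "(lam * \<mu>) * L \<le> L" using mult_right_mono[OF lm L0] by simp
    ultimately show ?thesis by linarith
  qed
  have F0: "F (\<lambda>_. 0) = lam / 2" unfolding F_def using nj by simp
  show "f_lam lam N x (x j) X0 = lam / 2"
  proof (cases "X0 = {}")
    case True thus ?thesis by (simp add: f_lam_def)
  next
    case False
    have "f_lam lam N x (x j) X0 = Inf (F ` UNIV)"
      using False unfolding f_lam_def F_def S_def by simp
    also have "\<dots> = lam / 2"
      by (rule cInf_eq_minimum) (use F0 lb in auto)
    finally show ?thesis .
  qed
qed

end
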